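(* Let $Q=(Q_0,Q_1,h,t)$ be a quiver with no oriented cycles, and let $\mu$ be an increasing slope function on $\mathrm{mod}\text{-}\mathbb{C}Q$. Then for each $\boldsymbol d\in\mathbb{N}^{Q_0}\setminus\{0\}$, exactly one of the following holds: (a) $\boldsymbol d=\delta_v$ for some $v\in Q_0$. Then $\mathcal{M}^{\rm st}_{\boldsymbol d}(\mu)=\mathcal{M}^{\rm ss}_{\boldsymbol d}(\mu)$ is a single point $*$. (b) $\boldsymbol d\neq\delta_v$ for every $v\in Q_0$, and for some $t\in\mathbb{R}$ we have $\boldsymbol d(v)=0$ for all $v\in Q_0$ with $\mu_v\neq t$. Then $\mathcal{M}^{\rm st}_{\boldsymbol d}(\mu)=\emptyset$ and $\mathcal{M}^{\rm ss}_{\boldsymbol d}(\mu)\cong[*/\mathrm{PGL}_{\boldsymbol d}]$. Also $2-\chi(\boldsymbol d,\boldsymbol d)<0$ in this case. (c) Neither (a) nor (b) holds. Then $\mathcal{M}^{\rm st}_{\boldsymbol d}(\mu)=\mathcal{M}^{\rm ss}_{\boldsymbol d}(\mu)=\emptyset$.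
   Context: A quiver $Q=(Q_0,Q_1,h,t)$ is a finite directed graph with vertex set $Q_0$, edge set $Q_1$, head and tail maps $h,t:Q_1\to Q_0$. An oriented cycle is a closed loop of directed edges. A representation $(\boldsymbol V,\boldsymbol\rho)$ of $Q$ consists of finite-dimensional $\mathbb{C}$-vector spaces $V_v$ ($v\in Q_0$) and linear maps $\rho_e:V_{t(e)}\to V_{h(e)}$ ($e\in Q_1$); these form the $\mathbb{C}$-linear abelian category $\mathrm{mod}\text{-}\mathbb{C}Q$. Its dimension vector is $\boldsymbol d=\dim(\boldsymbol V,\boldsymbol\rho)\in\mathbb{N}^{Q_0}$, $\boldsymbol d(v)=\dim V_v$. For $v\in Q_0$, $\delta_v\in\mathbb{N}^{Q_0}$ has $\delta_v(v)=1$, $\delta_v(w)=0$ for $w\ne v$. For $\boldsymbol d\in\mathbb{N}^{Q_0}$ put $R_{\boldsymbol d}=\prod_{e\in Q_1}\mathrm{Hom}(\mathbb{C}^{\boldsymbol d(t(e))},\mathbb{C}^{\boldsymbol d(h(e))})$, $\mathrm{GL}_{\boldsymbol d}=\prod_{v\in Q_0}\mathrm{GL}(\boldsymbol d(v),\mathbb{C})$ acting by $(A_v)\cdot(B_e)=(A_{h(e)}B_eA_{t(e)}^{-1})$, and $\mathrm{PGL}_{\boldsymbol d}=\mathrm{GL}_{\boldsymbol d}/\mathbb{G}_m$, where $\mathbb{G}_m$ is the diagonal scalars. The projective linear moduli stack of representations of dimension $\boldsymbol d$ is the quotient stack $\mathcal{M}^{\rm pl}_{\boldsymbol d}=[R_{\boldsymbol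 d}/\mathrm{PGL}_{\boldsymbol d}]$. A slope function $\mu$ is given by real numbers $(\mu_v)_{v\in Q_0}$ via $\mu(\boldsymbol d)=\sum_v\mu_v\boldsymbol d(v)/\sum_v\boldsymbol d(v)$ for $\boldsymbol d\in\mathbb{N}^{Q_0}\setminus\{0\}$. A nonzero object $E$ is $\mu$-stable (resp. $\mu$-semistable) if for every subobject $0\neq E'\subsetneq E$ we have $\mu(\dim E')<\mu(\dim E/E')$ (resp. $\le$). $\mathcal{M}^{\rm st}_{\boldsymbol d}(\mu)\subseteq\mathcal{M}^{\rm ss}_{\boldsymbol d}(\mu)\subseteq\mathcal{M}^{\rm pl}_{\boldsymbol d}$ denote the open substacks of $\mu$-stable, resp. $\mu$-semistable, representations of dimension $\boldsymbol d$. The slope function $\mu$ is called increasing if $\mu_v<\mu_w$ for every edge $v\to w$ in $Q$. The Euler form is $\chi_Q(\boldsymbol d,\boldsymbol e)=\sum_{v\in Q_0}\boldsymbol d(v)\boldsymbol e(v)-\sum_{e\in Q_1}\boldsymbol d(t(e))\boldsymbol e(h(e))$, and $\chi(\boldsymbol d,\boldsymbol e)=\chi_Q(\boldsymbol d,\boldsymbol e)+\chi_Q(\boldsymbol e,\boldsymbol d)$. *)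

theory Defs
  imports Complex_Main
begin

text \<open>Vectors of C^n are functions nat \<Rightarrow> complex vanishing from index n on;
  linear maps C^m \<rightarrow> C^n are matrices nat \<Rightarrow> nat \<Rightarrow> complex
  (entry (i,j) for i < n, j < m, zero elsewhere).\<close>

definition no_oriented_cycles :: "('e \<Rightarrow> 'v) \<Rightarrow> ('e \<Rightarrow> 'v) \<Rightarrow> bool" where
  "no_oriented_cycles h t \<longleftrightarrow>
     \<not> (\<exists>es. es \<noteq> [] \<and> (\<forall>i. Suc i < length es \<longrightarrow> h (es ! i) = t (es ! Suc i))
              \<and> h (last es) = t (hd es))"

definition increasing_slope :: "('e \<Rightarrow> 'v) \<Rightarrow> ('e \<Rightarrow> 'v) \<Rightarrow> ('v \<Rightarrow> real) \<Rightarrow> bool" where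
  "increasing_slope h t \<mu> \<longleftrightarrow> (\<forall>e. \<mu> (t e) < \<mu> (h e))"

definition slope :: "('v::finite \<Rightarrow> real) \<Rightarrow> ('v \<Rightarrow> nat) \<Rightarrow> real" where
  "slope \<mu> d = (\<Sum>v\<in>UNIV. \<mu> v * real (d v)) / (\<Sum>v\<in>UNIV. real (d v))"

definition delta :: "'v \<Rightarrow> 'v \<Rightarrow> nat" where
  "delta v = (\<lambda>w. if w = v then 1 else 0)"

definition cvecs :: "nat \<Rightarrow> (nat \<Rightarrow> complex) set" where
  "cvecs n = {x. \<forall>i\<ge>n. x i = 0}"

definition cspan :: "(nat \<Rightarrow> complex) set \<Rightarrow> (nat \<Rightarrow> complex) set" where
  "cspan S = {x. \<exists>c. x = (\<lambda>i. \<Sum>s\<in>S. c s * s i)}"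

definition csubspace :: "(nat \<Rightarrow> complex) set \<Rightarrow> nat \<Rightarrow> bool" where
  "csubspace W n \<longleftrightarrow> W \<subseteq> cvecs n \<and> (\<lambda>i. 0) \<in> W \<and>
     (\<forall>x\<in>W. \<forall>y\<in>W. (\<lambda>i. x i + y i) \<in> W) \<and> (\<forall>c. \<forall>x\<in>W. (\<lambda>i. c * x i) \<in> W)"

definition cdim :: "(nat \<Rightarrow> complex) set \<Rightarrow> nat" where
  "cdim W = (LEAST k. \<exists>S. finite S \<and> card S = k \<and> S \<subseteq> W \<and> W = cspan S)"

definition mapply :: "(nat \<Rightarrow> nat \<Rightarrow> complex) \<Rightarrow> nat \<Rightarrow> (nat \<Rightarrow> complex) \<Rightarrow> (nat \<Rightarrow> complex)" where
  "mapply A m x = (\<lambda>i. \<Sum>j<m. A i j * x j)"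

definition Rep :: "('e \<Rightarrow> 'v) \<Rightarrow> ('e \<Rightarrow> 'v) \<Rightarrow> ('v \<Rightarrow> nat) \<Rightarrow> ('e \<Rightarrow> nat \<Rightarrow> nat \<Rightarrow> complex) set" where
  "Rep h t d = {B. \<forall>e i j. (d (h e) \<le> i \<or> d (t e) \<le> j) \<longrightarrow> B e i j = 0}"

definition subrep :: "('e \<Rightarrow> 'v) \<Rightarrow> ('e \<Rightarrow> 'v) \<Rightarrow> ('v \<Rightarrow> nat) \<Rightarrow> ('e \<Rightarrow> nat \<Rightarrow> nat \<Rightarrow> complex)
     \<Rightarrow> ('v \<Rightarrow> (nat \<Rightarrow> complex) set) \<Rightarrow> bool" where
  "subrep h t d B W \<longleftrightarrow> (\<forall>v. csubspace (W v) (d v)) \<and>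
     (\<forall>e. \<forall>x\<in>W (t e). mapply (B e) (d (t e)) x \<in> W (h e))"

definition stable_rep :: "('e \<Rightarrow> 'v) \<Rightarrow> ('e \<Rightarrow> 'v::finite) \<Rightarrow> ('v \<Rightarrow> real) \<Rightarrow> ('v \<Rightarrow> nat)
     \<Rightarrow> ('e \<Rightarrow> nat \<Rightarrow> nat \<Rightarrow> complex) \<Rightarrow> bool" where
  "stable_rep h t \<mu> d B \<longleftrightarrow> B \<in> Rep h t d \<and> d \<noteq> (\<lambda>v. 0) \<and>
     (\<forall>W. subrep h t d B W \<longrightarrow> (\<lambda>v. cdim (W v)) \<noteq> (\<lambda>v. 0) \<longrightarrow> (\<lambda>v. cdim (W v)) \<noteq> d \<longrightarrow>
        slope \<mu> (\<lambda>v. cdim (W v)) < slope \<mu> (\<lambda>v. d v - cdim (W v)))"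

definition semistable_rep :: "('e \<Rightarrow> 'v) \<Rightarrow> ('e \<Rightarrow> 'v::finite) \<Rightarrow> ('v \<Rightarrow> real) \<Rightarrow> ('v \<Rightarrow> nat)
     \<Rightarrow> ('e \<Rightarrow> nat \<Rightarrow> nat \<Rightarrow> complex) \<Rightarrow> bool" where
  "semistable_rep h t \<mu> d B \<longleftrightarrow> B \<in> Rep h t d \<and> d \<noteq> (\<lambda>v. 0) \<and>
     (\<forall>W. subrep h t d B W \<longrightarrow> (\<lambda>v. cdim (W v)) \<noteq> (\<lambda>v. 0) \<longrightarrow> (\<lambda>v. cdim (W v)) \<noteq> d \<longrightarrow>
        slope \<mu> (\<lambda>v. cdim (W v)) \<le> slope \<mu> (\<lambda>v. d v - cdim (W v)))"

text \<open>The stable / semistable loci in R_d (the atlases of M^st_d, M^ss_d).\<close>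
definition Mst where "Mst h t \<mu> d = {B \<in> Rep h t d. stable_rep h t \<mu> d B}"
definition Mss where "Mss h t \<mu> d = {B \<in> Rep h t d. semistable_rep h t \<mu> d B}"

definition chiQ :: "('e::finite \<Rightarrow> 'v) \<Rightarrow> ('e \<Rightarrow> 'v::finite) \<Rightarrow> ('v \<Rightarrow> nat) \<Rightarrow> ('v \<Rightarrow> nat) \<Rightarrow> int" where
  "chiQ h t d e = (\<Sum>v\<in>UNIV. int (d v) * int (e v)) - (\<Sum>a\<in>UNIV. int (d (t a)) * int (e (h a)))"

definition chi :: "('e::finite \<Rightarrow> 'v) \<Rightarrow> ('e \<Rightarrow> 'v::finite) \<Rightarrow> ('v \<Rightarrow> nat) \<Rightarrow> ('v \<Rightarrow> nat) \<Rightarrow> int" where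
  "chi h t d e = chiQ h t d e + chiQ h t e d"

definition caseA :: "('v \<Rightarrow> nat) \<Rightarrow> bool" where
  "caseA d \<longleftrightarrow> (\<exists>v. d = delta v)"

definition caseB :: "('v \<Rightarrow> real) \<Rightarrow> ('v \<Rightarrow> nat) \<Rightarrow> bool" where
  "caseB \<mu> d \<longleftrightarrow> (\<forall>v. d \<noteq> delta v) \<and> (\<exists>r::real. \<forall>v. \<mu> v \<noteq> r \<longrightarrow> d v = 0)"

end

theory Submission
  imports Defs
begin

lemma csub_zero: "csubspace W n \<Longrightarrow> (\<lambda>i. 0) \<in> W"
  unfolding csubspace_def by (elim conjE)

lemma csub_add: "csubspace W n \<Longrightarrow> x \<in> W \<Longrightarrow> y \<in> W \<Longrightarrow> (\<lambda>i. x i + y i) \<in> W"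
  unfolding csubspace_def by (elim conjE) (drule bspec, assumption, drule bspec, assumption)

lemma csub_smult: "csubspace W n \<Longrightarrow> x \<in> W \<Longrightarrow> (\<lambda>i. c * x i) \<in> W"
  unfolding csubspace_def by (elim conjE) (drule spec[of _ c], drule bspec, assumption)

lemma csub_vecs: "csubspace W n \<Longrightarrow> x \<in> W \<Longrightarrow> x \<in> cvecs n"
  unfolding csubspace_def by (elim conjE) (erule subsetD)

lemma csubI: "W \<subseteq> cvecs n \<Longrightarrow> (\<lambda>i. 0) \<in> W \<Longrightarrow> (\<And>x y. x \<in> W \<Longrightarrow> y \<in> W \<Longrightarrow> (\<lambda>i. x i + y i) \<in> W)
  \<Longrightarrow> (\<And>c x. x \<in> W \<Longrightarrow> (\<lambda>i. c * x i) \<in> W) \<Longrightarrow> csubspace W n"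
  unfolding csubspace_def by blast

lemma cspan_in:
  assumes "csubspace W n" "finite S" "S \<subseteq> W"
  shows "(\<lambda>i. \<Sum>s\<in>S. c s * s i) \<in> W"
  using assms(2,3)
proof (induction S rule: finite_induct)
  case empty
  then show ?case using csub_zero[OF assms(1)] by simp
next
  case (insert x F)
  have a: "(\<lambda>i. \<Sum>s\<in>F. c s * s i) \<in> W" using insert by simp
  have xW: "x \<in> W" using insert by simp
  have b: "(\<lambda>i. c x * x i) \<in> W" by (rule csub_smult[OF assms(1) xW])
  have "(\<lambda>i. (\<lambda>i. c x * x i) i + (\<lambda>i. \<Sum>s\<in>F. c s * s i) i) \<in> W"
    by (rule csub_add[OF assms(1) b a])
  then show ?case using insert by simp
qed

lemma span_bound:
  "csubspace W n \<Longrightarrow> \<exists>S. finite S \<and> card S \<le> n \<and> S \<subseteq> W \<and> W = cspan S"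
proof (induction n arbitrary: W)
  case 0
  have "W = {\<lambda>i. 0}"
  proof
    show "W \<subseteq> {\<lambda>i. 0}"
    proof
      fix x assume "x \<in> W"
      then have "x \<in> cvecs 0" by (rule csub_vecs[OF 0])
      then have "x = (\<lambda>i. 0)" unfolding cvecs_def by auto
      then show "x \<in> {\<lambda>i. 0}" by simp
    qed
    show "{\<lambda>i. 0} \<subseteq> W" using csub_zero[OF 0] by simp
  qed
  moreover have "cspan {} = {\<lambda>i. 0}" by (simp add: cspan_def)
  ultimately show ?case by (intro exI[of _ "{}"]) auto
next
  case (Suc n)
  define W' where "W' = {x\<in>W. x n = 0}"
  have sub: "csubspace W' n"
  proof (rule csubI)
    show "W' \<subseteq> cvecs n"
    proof
      fix x assume x: "x \<in> W'"
      then have "x \<in> cvecs (Suc n)" "x n = 0" using csub_vecs[OF Suc.prems] unfolding W'_def by auto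
      then have A: "\<forall>i\<ge>Suc n. x i = 0" and B: "x n = 0" unfolding cvecs_def by auto
      have "x i = 0" if "n \<le> i" for i
      proof (cases "i = n")
        case True then show ?thesis using B by simp
      next
        case False then have "Suc n \<le> i" using that by simp
        then show ?thesis using A by simp
      qed
      then show "x \<in> cvecs n" unfolding cvecs_def by simp
    qed
    show "(\<lambda>i. 0) \<in> W'" using csub_zero[OF Suc.prems] unfolding W'_def by simp
    show "(\<lambda>i. x i + y i) \<in> W'" if "x \<in> W'" "y \<in> W'" for x y
      using that csub_add[OF Suc.prems, of x y] unfolding W'_def by simp
    show "(\<lambda>i. c * x i) \<in> W'" if "x \<in> W'" for c x
      using that csub_smult[OF Suc.prems, of x c] unfolding W'_def by simp
  qed
  from Suc.IH[OF sub] obtain S' where S': "finite S'" "card S' \<le> n" "S' \<subseteq> W'" "W' = cspan S'"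
    by blast
  show ?case
  proof (cases "\<forall>x\<in>W. x n = 0")
    case True
    then have "W' = W" unfolding W'_def by auto
    then show ?thesis using S' by (intro exI[of _ S'] conjI) simp_all
  next
    case False
    then obtain y where y: "y \<in> W" "y n \<noteq> 0" by auto
    have ynot: "y \<notin> S'" using S'(3) y unfolding W'_def by auto
    define S where "S = insert y S'"
    have fS: "finite S" using S' S_def by auto
    have cS: "card S \<le> Suc n" using S' ynot S_def by auto
    have SW: "S \<subseteq> W" using S' y S_def W'_def by auto
    have "W = cspan S"
    proof
      show "cspan S \<subseteq> W" using cspan_in[OF Suc.prems fS SW] unfolding cspan_def by auto
      show "W \<subseteq> cspan S"
      proof
        fix x assume x: "x \<in> W"
        define a where "a = x n / y n"
        have m: "(\<lambda>i. (- a) * y i) \<in> W" by (rule csub_smult[OF Suc.prems y(1)])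
        have "(\<lambda>i. x i + (\<lambda>i. (- a) * y i) i) \<in> W" by (rule csub_add[OF Suc.prems x m])
        moreover have "x n + (- a) * y n = 0" using y by (simp add: a_def)
        ultimately have "(\<lambda>i. x i + (- a) * y i) \<in> W'" unfolding W'_def by auto
        then obtain c where c: "(\<lambda>i. x i + (- a) * y i) = (\<lambda>i. \<Sum>s\<in>S'. c s * s i)"
          using S'(4) unfolding cspan_def by auto
        define c' where "c' = c(y := a)"
        have "x = (\<lambda>i. \<Sum>s\<in>S. c' s * s i)"
        proof
          fix i
          have "(\<Sum>s\<in>S. c' s * s i) = a * y i + (\<Sum>s\<in>S'. c' s * s i)"
            using S_def S'(1) ynot c'_def by simp
          also have "(\<Sum>s\<in>S'. c' s * s i) = (\<Sum>s\<in>S'. c s * s i)"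
            using ynot c'_def by (intro sum.cong) auto
          also have "\<dots> = x i + (- a) * y i" using fun_cong[OF c, of i] by simp
          finally show "x i = (\<Sum>s\<in>S. c' s * s i)" by simp
        qed
        then show "x \<in> cspan S" unfolding cspan_def by auto
      qed
    qed
    then show ?thesis by (intro exI[of _ S] conjI fS cS SW)
  qed
qed

lemma cdim_le_card: "finite S \<Longrightarrow> S \<subseteq> W \<Longrightarrow> W = cspan S \<Longrightarrow> cdim W \<le> card S"
  unfolding cdim_def
  apply (rule Least_le)
  apply (rule exI)
  apply (intro conjI)
     apply assumption
    apply (rule refl)
   apply assumption+
  done

lemma cdim_bound: "csubspace W n \<Longrightarrow> cdim W \<le> n"
proof -
  assume "csubspace W n"
  then obtain S where "finite S" "card S \<le> n" "S \<subseteq> W" "W = cspan S" using span_bound by blast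
  then show ?thesis using cdim_le_card[of S W] by simp
qed

lemma subspace_zero: "csubspace {\<lambda>i. 0} n"
  by (rule csubI) (auto simp: cvecs_def)

lemma subspace_cvecs1: "n \<ge> 1 \<Longrightarrow> csubspace (cvecs 1) n"
  by (rule csubI) (auto simp: cvecs_def)

lemma cdim_zero: "cdim {\<lambda>i. 0} = 0"
proof -
  have "cdim {\<lambda>i. 0} \<le> 0" by (rule cdim_bound[OF subspace_zero])
  then show ?thesis by (rule le_0_eq[THEN iffD1])
qed

lemma cdim_cvecs1: "cdim (cvecs 1) = 1"
proof -
  have le: "cdim (cvecs 1) \<le> 1" by (rule cdim_bound[OF subspace_cvecs1[OF order_refl]])
  have "cdim (cvecs 1) \<noteq> 0"
  proof
    assume z: "cdim (cvecs 1) = 0"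
    obtain S0 where S0: "finite S0" "S0 \<subseteq> cvecs 1" "cvecs 1 = cspan S0"
      using span_bound[OF subspace_cvecs1[OF order_refl]] by blast
    have ex: "\<exists>k S. finite S \<and> card S = k \<and> S \<subseteq> cvecs 1 \<and> cvecs 1 = cspan S"
      apply (rule exI[of _ "card S0"])
      apply (rule exI[of _ S0])
      using S0 by simp
    have "\<exists>S. finite S \<and> card S = cdim (cvecs 1) \<and> S \<subseteq> cvecs 1 \<and> cvecs 1 = cspan S"
      unfolding cdim_def by (rule LeastI_ex[OF ex])
    then obtain S where S: "finite S" "card S = 0" "cvecs 1 = cspan S"
      unfolding z by blast
    then have "S = {}" by simp
    then have cv: "cvecs 1 = cspan {}" using S(3) by simp
    have e: "(\<lambda>i::nat. if i = 0 then (1::complex) else 0) \<in> cvecs 1" by (simp add: cvecs_def)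
    have "cspan {} = {\<lambda>i. 0::complex}" by (simp add: cspan_def)
    then have "(\<lambda>i::nat. if i = 0 then (1::complex) else 0) \<in> {\<lambda>i. 0}" using e cv by simp
    then have "(\<lambda>i::nat. if i = 0 then (1::complex) else 0) = (\<lambda>i. 0)" by (rule singletonD)
    then have "(\<lambda>i::nat. if i = 0 then (1::complex) else 0) 0 = (\<lambda>i::nat. 0::complex) 0" by (rule fun_cong)
    then show False by simp
  qed
  then show ?thesis using le by simp
qed

lemma slope_const:
  fixes x :: "'v::finite \<Rightarrow> nat"
  assumes "x \<noteq> (\<lambda>v. 0)" "\<forall>v. x v \<noteq> 0 \<longrightarrow> \<mu> v = r"
  shows "slope \<mu> x = r"
proof -
  obtain w where w: "x w \<noteq> 0" using assms(1) by auto
  have pos: "(\<Sum>v\<in>UNIV. real (x v)) > 0"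
    using member_le_sum[of w UNIV "\<lambda>v. real (x v)"] w by fastforce
  have "(\<Sum>v\<in>UNIV. \<mu> v * real (x v)) = (\<Sum>v\<in>UNIV. r * real (x v))"
    using assms(2) by (intro sum.cong) auto
  also have "\<dots> = r * (\<Sum>v\<in>UNIV. real (x v))" by (simp add: sum_distrib_left)
  finally show ?thesis using pos unfolding slope_def by simp
qed

lemma slope_lt:
  fixes x :: "'v::finite \<Rightarrow> nat"
  assumes "\<forall>v. x v \<noteq> 0 \<longrightarrow> \<mu> v \<le> r" "x w \<noteq> 0" "\<mu> w < r"
  shows "slope \<mu> x < r"
proof -
  have pos: "(\<Sum>v\<in>UNIV. real (x v)) > 0"
    using member_le_sum[of w UNIV "\<lambda>v. real (x v)"] assms(2) by fastforce
  have "(\<Sum>v\<in>UNIV. \<mu> v * real (x v)) < (\<Sum>v\<in>UNIV. r * real (x v))"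
  proof (rule sum_strict_mono_ex1)
    show "\<forall>v\<in>UNIV. \<mu> v * real (x v) \<le> r * real (x v)"
      using assms(1) by (metis mult_right_mono of_nat_0 of_nat_0_le_iff mult_zero_right order_refl)
    show "\<exists>v\<in>UNIV. \<mu> v * real (x v) < r * real (x v)"
      using assms(2,3) by (intro bexI[of _ w]) auto
  qed simp
  also have "\<dots> = r * (\<Sum>v\<in>UNIV. real (x v))" by (simp add: sum_distrib_left)
  finally show ?thesis using pos unfolding slope_def by (simp add: pos_divide_less_eq)
qed

lemma rep_zero:
  assumes "\<forall>e. d (h e) = 0 \<or> d (t e) = 0"
  shows "Rep h t d = {\<lambda>e i j. 0}"
proof
  show "Rep h t d \<subseteq> {\<lambda>e i j. 0}"
  proof
    fix B assume "B \<in> Rep h t d"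
    then have "B = (\<lambda>e i j. 0)" unfolding Rep_def using assms by (auto intro!: ext) (metis le0)
    then show "B \<in> {\<lambda>e i j. 0}" by simp
  qed
  show "{\<lambda>e i j. 0} \<subseteq> Rep h t d" unfolding Rep_def by auto
qed

lemma subrep_zero: "(\<forall>v. csubspace (W v) (d v)) \<Longrightarrow> subrep h t d (\<lambda>e i j. 0) W"
proof -
  assume a: "\<forall>v. csubspace (W v) (d v)"
  have m: "mapply (\<lambda>i j. 0) n x = (\<lambda>i. 0)" for n x by (simp add: mapply_def)
  have z: "(\<lambda>i. 0) \<in> W v" for v using a unfolding csubspace_def by blast
  show ?thesis unfolding subrep_def
  proof (intro conjI allI ballI)
    show "csubspace (W v) (d v)" for v using a by blast
    fix e x show "mapply ((\<lambda>e i j. 0) e) (d (t e)) x \<in> W (h e)"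
      unfolding m by (rule z)
  qed
qed

lemma subrep_dim: "subrep h t d B W \<Longrightarrow> cdim (W v) \<le> d v"
  unfolding subrep_def using cdim_bound by blast

lemma stable_semi: "stable_rep h t \<mu> d B \<Longrightarrow> semistable_rep h t \<mu> d B"
proof -
  assume st: "stable_rep h t \<mu> d B"
  show ?thesis unfolding semistable_rep_def
  proof (intro conjI allI impI)
    show "B \<in> Rep h t d" "d \<noteq> (\<lambda>v. 0)" using st unfolding stable_rep_def by blast+
    fix W assume "subrep h t d B W" "(\<lambda>v. cdim (W v)) \<noteq> (\<lambda>v. 0)" "(\<lambda>v. cdim (W v)) \<noteq> d"
    then have "slope \<mu> (\<lambda>v. cdim (W v)) < slope \<mu> (\<lambda>v. d v - cdim (W v))"
      using st unfolding stable_rep_def by blast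
    then show "slope \<mu> (\<lambda>v. cdim (W v)) \<le> slope \<mu> (\<lambda>v. d v - cdim (W v))" by simp
  qed
qed

definition Wv :: "'v \<Rightarrow> 'v \<Rightarrow> (nat \<Rightarrow> complex) set" where
  "Wv v = (\<lambda>w. if w = v then cvecs 1 else {\<lambda>i. 0})"

lemma cdim_Wv: "(\<lambda>w. cdim (Wv v w)) = delta v"
proof
  fix w show "cdim (Wv v w) = delta v w"
  proof (cases "w = v")
    case True
    then have "Wv v w = cvecs 1" "delta v w = 1" unfolding Wv_def delta_def by simp_all
    then show ?thesis using cdim_cvecs1 by metis
  next
    case False
    then have "Wv v w = {\<lambda>i. 0}" "delta v w = 0" unfolding Wv_def delta_def by simp_all
    then show ?thesis using cdim_zero by metis
  qed
qed

lemma csub_Wv: "d v \<ge> 1 \<Longrightarrow> csubspace (Wv v w) (d w)"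
proof -
  assume "d v \<ge> 1"
  then show ?thesis using subspace_cvecs1[of "d v"] subspace_zero[of "d w"] unfolding Wv_def
    by (cases "w = v") simp_all
qed

theorem proposition5p1:
  fixes h t :: "'e::finite \<Rightarrow> 'v::finite" and \<mu> :: "'v \<Rightarrow> real" and d :: "'v \<Rightarrow> nat"
  assumes "no_oriented_cycles h t"
    and "increasing_slope h t \<mu>"
    and "d \<noteq> (\<lambda>v. 0)"
  shows "((caseA d \<and> \<not> caseB \<mu> d) \<or> (\<not> caseA d \<and> caseB \<mu> d) \<or> (\<not> caseA d \<and> \<not> caseB \<mu> d))
    \<and> (caseA d \<longrightarrow> Mst h t \<mu> d = Mss h t \<mu> d \<and> (\<exists>B. Mss h t \<mu> d = {B}))
    \<and> (caseB \<mu> d \<longrightarrow> Mst h t \<mu> d = {} \<and> (\<exists>B. Mss h t \<mu> d = {B}) \<and> 2 - chi h t d d < 0)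
    \<and> (\<not> caseA d \<and> \<not> caseB \<mu> d \<longrightarrow> Mst h t \<mu> d = {} \<and> Mss h t \<mu> d = {})"
proof -
  have inc: "\<And>e. \<mu> (t e) < \<mu> (h e)" using assms(2) unfolding increasing_slope_def by blast
  define Z where "Z = (\<lambda>(e::'e) (i::nat) (j::nat). (0::complex))"
  have part1: "(caseA d \<and> \<not> caseB \<mu> d) \<or> (\<not> caseA d \<and> caseB \<mu> d) \<or> (\<not> caseA d \<and> \<not> caseB \<mu> d)"
    unfolding caseA_def caseB_def by blast
  have part2: "caseA d \<longrightarrow> Mst h t \<mu> d = Mss h t \<mu> d \<and> (\<exists>B. Mss h t \<mu> d = {B})"
  proof
    assume "caseA d"
    then obtain v where dv: "d = delta v" unfolding caseA_def by blast
    have "d (h e) = 0 \<or> d (t e) = 0" for e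
    proof -
      have "h e \<noteq> t e" using inc[of e] by auto
      then show ?thesis using dv by (auto simp: delta_def)
    qed
    then have R: "Rep h t d = {Z}" unfolding Z_def by (intro rep_zero) blast
    have key: "(\<lambda>w. cdim (W w)) = d"
      if W: "subrep h t d Z W" "(\<lambda>w. cdim (W w)) \<noteq> (\<lambda>w. 0)" for W
    proof -
      have le: "\<And>w. cdim (W w) \<le> d w" using subrep_dim[OF W(1)] by blast
      have o: "cdim (W w) = 0" if "w \<noteq> v" for w
        using le[of w] that dv by (simp add: delta_def)
      have "cdim (W v) \<noteq> 0"
      proof
        assume "cdim (W v) = 0"
        then have "\<forall>w. cdim (W w) = 0" using o by metis
        then have "(\<lambda>w. cdim (W w)) = (\<lambda>w. 0)" by simp
        then show False using W(2) by simp
      qed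
      then have v1: "cdim (W v) = 1" using le[of v] dv by (simp add: delta_def)
      show "(\<lambda>w. cdim (W w)) = d"
      proof
        fix w show "cdim (W w) = d w" using v1 o[of w] dv by (cases "w = v") (simp_all add: delta_def)
      qed
    qed
    have st: "stable_rep h t \<mu> d Z" unfolding stable_rep_def
    proof (intro conjI allI impI)
      show "Z \<in> Rep h t d" using R by simp
      show "d \<noteq> (\<lambda>v. 0)" by fact
      fix W assume "subrep h t d Z W" "(\<lambda>w. cdim (W w)) \<noteq> (\<lambda>w. 0)" "(\<lambda>w. cdim (W w)) \<noteq> d"
      then show "slope \<mu> (\<lambda>w. cdim (W w)) < slope \<mu> (\<lambda>w. d w - cdim (W w))"
        using key by blast
    qed
    have "Mst h t \<mu> d = {Z}" unfolding Mst_def using R st by blast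
    moreover have "Mss h t \<mu> d = {Z}" unfolding Mss_def using R stable_semi[OF st] by blast
    ultimately show "Mst h t \<mu> d = Mss h t \<mu> d \<and> (\<exists>B. Mss h t \<mu> d = {B})" by auto
  qed
  obtain v0 where v0: "d v0 \<noteq> 0" using assms(3) by auto
  have part3: "caseB \<mu> d \<longrightarrow> Mst h t \<mu> d = {} \<and> (\<exists>B. Mss h t \<mu> d = {B}) \<and> 2 - chi h t d d < 0"
  proof
    assume cB: "caseB \<mu> d"
    then obtain r where r: "\<forall>v. \<mu> v \<noteq> r \<longrightarrow> d v = 0" and nd: "\<forall>v. d \<noteq> delta v"
      unfolding caseB_def by blast
    have ed: "d (h e) = 0 \<or> d (t e) = 0" for e
    proof (rule ccontr)
      assume "\<not> (d (h e) = 0 \<or> d (t e) = 0)"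
      then have "\<mu> (h e) = r" "\<mu> (t e) = r" using r by auto
      then show False using inc[of e] by simp
    qed
    then have R: "Rep h t d = {Z}" unfolding Z_def by (intro rep_zero) blast
    have rr: "\<mu> u = r" if "d u \<noteq> 0" for u using r that by auto
    have ss: "semistable_rep h t \<mu> d Z"
      unfolding semistable_rep_def
    proof (intro conjI allI impI)
      show "Z \<in> Rep h t d" using R by simp
      show "d \<noteq> (\<lambda>v. 0)" by fact
      fix W assume W: "subrep h t d Z W" "(\<lambda>w. cdim (W w)) \<noteq> (\<lambda>w. 0)" "(\<lambda>w. cdim (W w)) \<noteq> d"
      have le: "cdim (W w) \<le> d w" for w using subrep_dim[OF W(1)] by blast
      have s1: "slope \<mu> (\<lambda>w. cdim (W w)) = r"
      proof (rule slope_const[OF W(2)], intro allI impI)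
        fix u assume "cdim (W u) \<noteq> 0"
        then have "d u \<noteq> 0" using le[of u] by linarith
        then show "\<mu> u = r" by (rule rr)
      qed
      have nz: "(\<lambda>w. d w - cdim (W w)) \<noteq> (\<lambda>w. 0)"
      proof
        assume a: "(\<lambda>w. d w - cdim (W w)) = (\<lambda>w. 0)"
        have "cdim (W w) = d w" for w
        proof -
          have "d w - cdim (W w) = 0" using fun_cong[OF a, of w] by simp
          then show ?thesis using le[of w] by linarith
        qed
        then have "(\<lambda>w. cdim (W w)) = d" by (rule ext)
        then show False using W(3) by contradiction
      qed
      have s2: "slope \<mu> (\<lambda>w. d w - cdim (W w)) = r"
      proof (rule slope_const[OF nz], intro allI impI)
        fix u assume "d u - cdim (W u) \<noteq> 0"
        then have "d u \<noteq> 0" by linarith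
        then show "\<mu> u = r" by (rule rr)
      qed
      show "slope \<mu> (\<lambda>w. cdim (W w)) \<le> slope \<mu> (\<lambda>w. d w - cdim (W w))" using s1 s2 by simp
    qed
    have dv0: "d v0 \<ge> 1" using v0 by simp
    have ne: "delta v0 \<noteq> (\<lambda>w. 0)"
    proof
      assume "delta v0 = (\<lambda>w. 0)"
      then have "delta v0 v0 = 0" by simp
      then show False by (simp add: delta_def)
    qed
    have ndv: "d \<noteq> delta v0" by (rule spec[OF nd])
    have nz2: "(\<lambda>w. d w - delta v0 w) \<noteq> (\<lambda>w. 0)"
    proof
      assume a: "(\<lambda>w. d w - delta v0 w) = (\<lambda>w. 0)"
      have "d w = delta v0 w" for w
      proof (cases "w = v0")
        case True
        have "d w - delta v0 w = 0" using fun_cong[OF a, of w] by simp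
        then show ?thesis using True dv0 by (simp add: delta_def)
      next
        case False
        have "d w - delta v0 w = 0" using fun_cong[OF a, of w] by simp
        then show ?thesis using False by (simp add: delta_def)
      qed
      then have "d = delta v0" by (rule ext)
      then show False using ndv by contradiction
    qed
    have nst: "\<not> stable_rep h t \<mu> d Z"
    proof
      assume st: "stable_rep h t \<mu> d Z"
      have sub: "subrep h t d Z (Wv v0)" unfolding Z_def
        by (rule subrep_zero) (intro allI csub_Wv[of d v0, OF dv0])
      have c: "(\<lambda>w. cdim (Wv v0 w)) = delta v0" by (rule cdim_Wv)
      have all: "\<forall>W. subrep h t d Z W \<longrightarrow> (\<lambda>v. cdim (W v)) \<noteq> (\<lambda>v. 0) \<longrightarrow> (\<lambda>v. cdim (W v)) \<noteq> d \<longrightarrow>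
        slope \<mu> (\<lambda>v. cdim (W v)) < slope \<mu> (\<lambda>v. d v - cdim (W v))"
        using st unfolding stable_rep_def by blast
      have "slope \<mu> (\<lambda>v. cdim (Wv v0 v)) < slope \<mu> (\<lambda>v. d v - cdim (Wv v0 v))"
        using all[rule_format, OF sub] ne ndv unfolding c by blast
      moreover have "cdim (Wv v0 v) = delta v0 v" for v using fun_cong[OF c, of v] by simp
      ultimately have lt: "slope \<mu> (delta v0) < slope \<mu> (\<lambda>v. d v - delta v0 v)" unfolding c by simp
      have e1: "slope \<mu> (delta v0) = r"
      proof (rule slope_const[OF ne], intro allI impI)
        fix u assume "delta v0 u \<noteq> 0"
        then have "u = v0" by (simp add: delta_def split: if_splits)
        then show "\<mu> u = r" using rr[OF v0] by simp
      qed
      have e2: "slope \<mu> (\<lambda>v. d v - delta v0 v) = r"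
      proof (rule slope_const[OF nz2], intro allI impI)
        fix u assume "d u - delta v0 u \<noteq> 0"
        then have "d u \<noteq> 0" by linarith
        then show "\<mu> u = r" by (rule rr)
      qed
      show False using lt e1 e2 by simp
    qed
    have M1: "Mst h t \<mu> d = {}" unfolding Mst_def R using nst by auto
    have M2: "Mss h t \<mu> d = {Z}" unfolding Mss_def R using ss by auto
    have nonneg: "\<And>v. 0 \<le> int (d v) * int (d v)" by simp
    have sq: "(\<Sum>v\<in>UNIV. int (d v) * int (d v)) \<ge> 2"
    proof (cases "d v0 \<ge> 2")
      case True
      have "(2::int) * 2 \<le> int (d v0) * int (d v0)" using True by (intro mult_mono) simp_all
      moreover have "int (d v0) * int (d v0) \<le> (\<Sum>v\<in>UNIV. int (d v) * int (d v))"
        by (rule member_le_sum) (simp_all add: nonneg)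
      ultimately show ?thesis by linarith
    next
      case False
      then have d1: "d v0 = 1" using v0 by simp
      have "d \<noteq> delta v0" by (rule ndv)
      then obtain w where w0: "d w \<noteq> delta v0 w" by blast
      have wv: "w \<noteq> v0" using w0 d1 by (auto simp: delta_def)
      have dw: "d w \<noteq> 0" using w0 wv by (simp add: delta_def)
      have "(\<Sum>v\<in>{v0, w}. int (d v) * int (d v)) \<le> (\<Sum>v\<in>UNIV. int (d v) * int (d v))"
        by (rule sum_mono2) (simp_all add: nonneg)
      moreover have "(\<Sum>v\<in>{v0, w}. int (d v) * int (d v)) = 1 + int (d w) * int (d w)"
        using wv d1 by simp
      moreover have "1 \<le> int (d w) * int (d w)"
      proof -
        have "1 \<le> int (d w)" using dw by simp
        then have "1 * 1 \<le> int (d w) * int (d w)" by (intro mult_mono) simp_all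
        then show ?thesis by simp
      qed
      ultimately show ?thesis by linarith
    qed
    have "(\<Sum>a\<in>UNIV. int (d (t a)) * int (d (h a))) = 0"
    proof (rule sum.neutral, rule ballI)
      fix a show "int (d (t a)) * int (d (h a)) = 0" using ed[of a] by auto
    qed
    then have "chi h t d d = 2 * (\<Sum>v\<in>UNIV. int (d v) * int (d v))"
      unfolding chi_def chiQ_def by simp
    then have "2 - chi h t d d < 0" using sq by linarith
    then show "Mst h t \<mu> d = {} \<and> (\<exists>B. Mss h t \<mu> d = {B}) \<and> 2 - chi h t d d < 0"
      using M1 M2 by blast
  qed
  have part4: "\<not> caseA d \<and> \<not> caseB \<mu> d \<longrightarrow> Mst h t \<mu> d = {} \<and> Mss h t \<mu> d = {}"
  proof
    assume nAB: "\<not> caseA d \<and> \<not> caseB \<mu> d"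
    define S where "S = {v. d v \<noteq> 0}"
    define m where "m = Max (\<mu> ` S)"
    have fS: "finite (\<mu> ` S)" by simp
    have neS: "\<mu> ` S \<noteq> {}" using v0 S_def by auto
    obtain v where v: "v \<in> S" "\<mu> v = m" using Max_in[OF fS neS] m_def by auto
    have lm: "\<And>w. d w \<noteq> 0 \<Longrightarrow> \<mu> w \<le> m" using Max_ge[OF fS] m_def S_def by auto
    have nd: "d \<noteq> delta v" using nAB unfolding caseA_def by blast
    have nA: "\<forall>u. d \<noteq> delta u" using nAB unfolding caseA_def by blast
    then have "\<not> (\<exists>r. \<forall>u. \<mu> u \<noteq> r \<longrightarrow> d u = 0)" using nAB unfolding caseB_def by blast
    then have "\<not> (\<forall>u. \<mu> u \<noteq> m \<longrightarrow> d u = 0)" by blast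
    then obtain w where w: "\<mu> w \<noteq> m" "d w \<noteq> 0" by blast
    have wlt: "\<mu> w < m" using lm[OF w(2)] w(1) by simp
    have nss: "\<not> semistable_rep h t \<mu> d B" for B
    proof
      assume ss: "semistable_rep h t \<mu> d B"
      then have BR: "B \<in> Rep h t d" unfolding semistable_rep_def by blast
      have dv1: "d v \<ge> 1" using v S_def by auto
      have sub: "subrep h t d B (Wv v)"
        unfolding subrep_def
      proof (intro conjI allI ballI)
        fix u show "csubspace (Wv v u) (d u)" by (rule csub_Wv[of d v, OF dv1])
      next
        fix e x assume x: "x \<in> Wv v (t e)"
        have "mapply (B e) (d (t e)) x = (\<lambda>i. 0)"
        proof (cases "t e = v")
          case True
          have "\<mu> (h e) > m" using inc[of e] True v by simp
          then have "d (h e) = 0" using lm by force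
          then have "\<And>i j. B e i j = 0" using BR unfolding Rep_def by auto
          then show ?thesis unfolding mapply_def by simp
        next
          case False
          then have "x = (\<lambda>i. 0)" using x unfolding Wv_def by simp
          then show ?thesis unfolding mapply_def by simp
        qed
        moreover have "(\<lambda>i. 0) \<in> Wv v (h e)"
          by (rule csub_zero[OF csub_Wv[of d v "h e", OF dv1]])
        ultimately show "mapply (B e) (d (t e)) x \<in> Wv v (h e)" by simp
      qed
      have ne: "delta v \<noteq> (\<lambda>w. 0)" unfolding delta_def by (metis one_neq_zero)
      have all: "\<forall>W. subrep h t d B W \<longrightarrow> (\<lambda>v. cdim (W v)) \<noteq> (\<lambda>v. 0) \<longrightarrow> (\<lambda>v. cdim (W v)) \<noteq> d \<longrightarrow>
        slope \<mu> (\<lambda>v. cdim (W v)) \<le> slope \<mu> (\<lambda>v. d v - cdim (W v))"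
        using ss unfolding semistable_rep_def by blast
      have c: "(\<lambda>w. cdim (Wv v w)) = delta v" by (rule cdim_Wv)
      have "slope \<mu> (\<lambda>u. cdim (Wv v u)) \<le> slope \<mu> (\<lambda>u. d u - cdim (Wv v u))"
        using all[rule_format, OF sub] ne nd unfolding c by blast
      moreover have "cdim (Wv v u) = delta v u" for u using fun_cong[OF c, of u] by simp
      ultimately have "slope \<mu> (delta v) \<le> slope \<mu> (\<lambda>u. d u - delta v u)" unfolding c by simp
      moreover have "slope \<mu> (delta v) = m"
        using ne v by (intro slope_const) (auto simp: delta_def)
      moreover have "slope \<mu> (\<lambda>u. d u - delta v u) < m"
      proof (rule slope_lt)
        show "\<forall>u. d u - delta v u \<noteq> 0 \<longrightarrow> \<mu> u \<le> m" using lm by auto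
        show "d w - delta v w \<noteq> 0" using w wlt v unfolding delta_def by auto
        show "\<mu> w < m" by fact
      qed
      ultimately show False by simp
    qed
    then have "Mss h t \<mu> d = {}" unfolding Mss_def by auto
    moreover have "Mst h t \<mu> d = {}" unfolding Mst_def using nss stable_semi by blast
    ultimately show "Mst h t \<mu> d = {} \<and> Mss h t \<mu> d = {}" by simp
  qed
  show ?thesis using part1 part2 part3 part4 by blast
qed

end
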